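(* Let $t\ge1$ be an integer and $\mathcal{I}\subseteq[K]$. Let $x,y\in\mathbb{R}^K$ with $x_i,y_i\in(0,1]$ for all $i\in\mathcal{I}$ and $\sum_{i\in\mathcal{I}}x_i=\sum_{i\in\mathcal{I}}y_i$, and suppose there is $c\in\mathbb{R}$ with $\nabla\phi^{t}_{\mathcal{I}}(y)=\nabla\phi^t_{\mathcal{I}}(x)-\hat\ell^t_{\mathcal{I}}+c\cdot\mathbf{1}_{\mathcal{I}}$. Then $\sum_{i\in\mathcal{I}}y_i^{4/3}\le8\sum_{i\in\mathcal{I}}x_i^{4/3}$.
   Context: $\phi^s(x)=-3K^{1/6}\sqrt{s}\sum_{i\in[K]}x_i^{2/3}$ (the $2/3$-Tsallis regularizer of Decoupled-Tsallis-INF) and $\phi^s_{\mathcal{I}}(x)=-3K^{1/6}\sqrt{s}\sum_{i\in\mathcal{I}}x_i^{2/3}$. For a vector $v$, $v_{\mathcal{I}}$ agrees with $v$ on $\mathcal{I}$ and is $0$ elsewhere; $\mathbf{1}_{\mathcal{I}}$ is the indicator vector of $\mathcal{I}$. $\hat\ell^t$ is the loss estimator of Decoupled-Tsallis-INF: $\hat\ell^t_i=\mathbb{1}\{j^t=i\}\ell^t_i/g^t_i$ for some $j^t\in[K]$, $\ell^t\in[0,1]^K$ and a probability vector $g^t$ with positive entries. *)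

theory Defs
  imports "HOL-Analysis.Analysis"
begin

text \<open>Vectors in R^K are functions nat => real indexed by [K] = {1..K}.\<close>

definition phi :: "nat \<Rightarrow> nat \<Rightarrow> (nat \<Rightarrow> real) \<Rightarrow> real" where
  "phi K s x = - 3 * real K powr (1/6) * sqrt (real s) * (\<Sum>i\<in>{1..K}. x i powr (2/3))"

definition phiI :: "nat \<Rightarrow> nat \<Rightarrow> nat set \<Rightarrow> (nat \<Rightarrow> real) \<Rightarrow> real" where
  "phiI K s I x = - 3 * real K powr (1/6) * sqrt (real s) * (\<Sum>i\<in>I. x i powr (2/3))"

definition grad :: "((nat \<Rightarrow> real) \<Rightarrow> real) \<Rightarrow> (nat \<Rightarrow> real) \<Rightarrow> nat \<Rightarrow> real" where
  "grad f x i = deriv (\<lambda>u. f (x(i := u))) (x i)"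

definition restrict_vec :: "(nat \<Rightarrow> real) \<Rightarrow> nat set \<Rightarrow> nat \<Rightarrow> real" where
  "restrict_vec v I = (\<lambda>i. if i \<in> I then v i else 0)"

definition ind_vec :: "nat set \<Rightarrow> nat \<Rightarrow> real" where
  "ind_vec I = (\<lambda>i. if i \<in> I then 1 else 0)"

definition loss_est :: "(nat \<Rightarrow> real) \<Rightarrow> (nat \<Rightarrow> real) \<Rightarrow> nat \<Rightarrow> nat \<Rightarrow> real" where
  "loss_est l g j = (\<lambda>i. (if j = i then 1 else 0) * l i / g i)"

end

theory Submission
  imports Defs
begin

lemma pt_bound:
  fixes x d X :: real
  assumes "0 < x" "0 \<le> d" "d \<le> X"
  shows "(x + d) powr (4/3) \<le> 4 * (x powr (4/3) + d * X powr (1/3))"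
proof -
  have c2: "(2::real) powr (4/3) \<le> 4"
  proof -
    have "(2::real) powr (4/3) \<le> 2 powr 2" by (rule powr_mono) auto
    then show ?thesis by simp
  qed
  show ?thesis
  proof (cases "d \<le> x")
    case True
    have "(x + d) powr (4/3) \<le> (2*x) powr (4/3)"
      using assms True by (intro powr_mono2) auto
    also have "\<dots> = 2 powr (4/3) * x powr (4/3)" using assms by (simp add: powr_mult)
    also have "\<dots> \<le> 4 * x powr (4/3)" using c2 by (intro mult_right_mono) auto
    also have "\<dots> \<le> 4 * (x powr (4/3) + d * X powr (1/3))" using assms by simp
    finally show ?thesis .
  next
    case False
    then have dp: "0 < d" using assms by simp
    have "(x + d) powr (4/3) \<le> (2*d) powr (4/3)"
      using assms False by (intro powr_mono2) auto
    also have "\<dots> = 2 powr (4/3) * d powr (4/3)" using dp by (simp add: powr_mult)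
    also have "d powr (4/3) = d powr (1 + 1/3)" by simp
    also have "\<dots> = d powr 1 * d powr (1/3)" by (rule powr_add)
    also have "\<dots> = d * d powr (1/3)" using dp by simp
    also have "\<dots> \<le> d * X powr (1/3)"
      using assms by (intro mult_left_mono powr_mono2) auto
    finally have "(x + d) powr (4/3) \<le> 2 powr (4/3) * (d * X powr (1/3))"
      by (simp add: mult_left_mono)
    also have "\<dots> \<le> 4 * (d * X powr (1/3))" using c2 assms by (intro mult_right_mono) auto
    also have "\<dots> \<le> 4 * (x powr (4/3) + d * X powr (1/3))" using assms by simp
    finally show ?thesis .
  qed
qed

lemma comb:
  fixes x y :: "nat \<Rightarrow> real"
  assumes fin: "finite I" and jI: "j \<in> I"
    and px: "\<forall>i\<in>I. 0 < x i" and py: "\<forall>i\<in>I. 0 < y i"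
    and sums: "(\<Sum>i\<in>I. x i) = (\<Sum>i\<in>I. y i)"
    and up: "\<forall>i\<in>I-{j}. x i \<le> y i"
  shows "(\<Sum>i\<in>I. y i powr (4/3)) \<le> 8 * (\<Sum>i\<in>I. x i powr (4/3))"
proof -
  let ?J = "I - {j}"
  have sx: "(\<Sum>i\<in>I. x i) = x j + (\<Sum>i\<in>?J. x i)" using fin jI by (simp add: sum.remove)
  have sy: "(\<Sum>i\<in>I. y i) = y j + (\<Sum>i\<in>?J. y i)" using fin jI by (simp add: sum.remove)
  define D where "D = (\<Sum>i\<in>?J. y i - x i)"
  have D: "D = x j - y j" using sx sy sums unfolding D_def by (simp add: sum_subtractf)
  have Dle: "D \<le> x j" using D py jI by auto
  have dle: "y i - x i \<le> D" if "i \<in> ?J" for i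
    unfolding D_def using fin that up by (intro member_le_sum) auto
  have "0 \<le> D" unfolding D_def using up by (intro sum_nonneg) auto
  then have yj: "y j powr (4/3) \<le> x j powr (4/3)"
    using D py jI by (intro powr_mono2) auto
  have each: "y i powr (4/3) \<le> 4 * (x i powr (4/3) + (y i - x i) * x j powr (1/3))"
    if "i \<in> ?J" for i
    using pt_bound[of "x i" "y i - x i" "x j"] that px up dle[OF that] Dle by auto
  have "(\<Sum>i\<in>?J. y i powr (4/3)) \<le> (\<Sum>i\<in>?J. 4 * (x i powr (4/3) + (y i - x i) * x j powr (1/3)))"
    using each by (intro sum_mono) auto
  also have "\<dots> = 4 * (\<Sum>i\<in>?J. x i powr (4/3)) + 4 * (D * x j powr (1/3))"
    unfolding D_def by (simp add: sum.distrib sum_distrib_left sum_distrib_right)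
  also have "D * x j powr (1/3) \<le> x j * x j powr (1/3)"
    using Dle by (intro mult_right_mono) auto
  also have "x j * x j powr (1/3) = x j powr (4/3)"
  proof -
    have "x j powr (4/3) = x j powr (1 + 1/3)" by simp
    also have "\<dots> = x j powr 1 * x j powr (1/3)" by (rule powr_add)
    finally show ?thesis using px jI by (simp add: abs_of_pos)
  qed
  finally have "(\<Sum>i\<in>?J. y i powr (4/3)) \<le> 4 * (\<Sum>i\<in>?J. x i powr (4/3)) + 4 * x j powr (4/3)"
    by simp
  moreover have "(\<Sum>i\<in>I. y i powr (4/3)) = y j powr (4/3) + (\<Sum>i\<in>?J. y i powr (4/3))"
    using fin jI by (simp add: sum.remove)
  moreover have "(\<Sum>i\<in>I. x i powr (4/3)) = x j powr (4/3) + (\<Sum>i\<in>?J. x i powr (4/3))"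
    using fin jI by (simp add: sum.remove)
  moreover have "0 \<le> (\<Sum>i\<in>?J. x i powr (4/3))" by (intro sum_nonneg) auto
  moreover have "0 \<le> x j powr (4/3)" by simp
  ultimately show ?thesis using yj by linarith
qed

lemma grad_phiI:
  fixes x :: "nat \<Rightarrow> real"
  assumes fin: "finite I" and iI: "i \<in> I" and xp: "0 < x i"
  shows "grad (phiI K t I) x i = - 2 * real K powr (1/6) * sqrt (real t) * x i powr (-1/3)"
proof -
  define A where "A = - 3 * real K powr (1/6) * sqrt (real t)"
  define R where "R = (\<Sum>k\<in>I-{i}. x k powr (2/3))"
  have feq: "(\<lambda>u. phiI K t I (x(i := u))) = (\<lambda>u. A * (u powr (2/3) + R))"
  proof
    fix u
    have "(\<Sum>k\<in>I. (x(i:=u)) k powr (2/3)) = (x(i:=u)) i powr (2/3) + (\<Sum>k\<in>I-{i}. (x(i:=u)) k powr (2/3))"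
      using fin iI by (simp add: sum.remove)
    also have "(\<Sum>k\<in>I-{i}. (x(i:=u)) k powr (2/3)) = R"
      unfolding R_def by (intro sum.cong) auto
    finally show "phiI K t I (x(i := u)) = A * (u powr (2/3) + R)"
      unfolding phiI_def A_def by simp
  qed
  have "((\<lambda>u. A * (u powr (2/3) + R)) has_real_derivative A * ((2/3) * x i powr (2/3 - 1) + 0)) (at (x i))"
    by (intro DERIV_cmult DERIV_add has_real_derivative_powr xp DERIV_const)
  then have "deriv (\<lambda>u. phiI K t I (x(i := u))) (x i) = A * ((2/3) * x i powr (2/3 - 1) + 0)"
    unfolding feq by (rule DERIV_imp_deriv)
  then show ?thesis unfolding grad_def A_def by simp
qed

theorem corollary1:
  fixes K t j :: nat and I :: "nat set" and x y l g :: "nat \<Rightarrow> real" and c :: real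
  assumes "t \<ge> 1"
    and "I \<subseteq> {1..K}"
    and "\<forall>i\<in>I. 0 < x i \<and> x i \<le> 1"
    and "\<forall>i\<in>I. 0 < y i \<and> y i \<le> 1"
    and "(\<Sum>i\<in>I. x i) = (\<Sum>i\<in>I. y i)"
    and "j \<in> {1..K}"
    and "\<forall>i\<in>{1..K}. 0 \<le> l i \<and> l i \<le> 1"
    and "\<forall>i\<in>{1..K}. 0 < g i"
    and "(\<Sum>i\<in>{1..K}. g i) = 1"
    and "\<forall>i\<in>{1..K}. grad (phiI K t I) y i
           = grad (phiI K t I) x i - restrict_vec (loss_est l g j) I i + c * ind_vec I i"
  shows "(\<Sum>i\<in>I. y i powr (4/3)) \<le> 8 * (\<Sum>i\<in>I. x i powr (4/3))"
proof (cases "I = {}")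
  case True then show ?thesis by simp
next
  case False
  have fin: "finite I" using assms(2) finite_subset by blast
  have Kp: "K \<ge> 1" using False assms(2) by auto
  define B where "B = 2 * real K powr (1/6) * sqrt (real t)"
  have Bp: "B > 0" unfolding B_def using Kp assms(1) by simp
  define L where "L = loss_est l g j"
  have Lnn: "L i \<ge> 0" if "i \<in> I" for i
  proof -
    have "i \<in> {1..K}" using that assms(2) by blast
    then have "0 \<le> l i" "0 < g i" using assms(7,8) by auto
    then show ?thesis unfolding L_def loss_est_def by simp
  qed
  have L0: "L i = 0" if "i \<noteq> j" for i
    using that unfolding L_def loss_est_def by auto
  have eq: "B * (x i powr (-1/3) - y i powr (-1/3)) = c - L i" if "i \<in> I" for i
  proof -
    have "grad (phiI K t I) y i = grad (phiI K t I) x i - L i + c"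
      using assms(10) assms(2) that unfolding restrict_vec_def ind_vec_def L_def by auto
    then show ?thesis
      using grad_phiI[OF fin that, of x K t] grad_phiI[OF fin that, of y K t] assms(3,4) that
      unfolding B_def by (auto simp: algebra_simps)
  qed
  have mono: "y i \<le> x i \<longleftrightarrow> x i powr (-1/3) \<le> y i powr (-1/3)" if "i \<in> I" for i
  proof -
    have "0 < x i" "0 < y i" using assms(3,4) that by auto
    then show ?thesis
      using powr_less_mono2_neg[of "-1/3" "x i" "y i"] powr_less_mono2_neg[of "-1/3" "y i" "x i"]
      by (cases "x i < y i"; cases "y i < x i") auto
  qed
  show ?thesis
  proof (cases "c \<le> 0")
    case True
    have "y i \<le> x i" if "i \<in> I" for i
    proof -
      have "B * (x i powr (-1/3) - y i powr (-1/3)) \<le> 0" using eq[OF that] Lnn[OF that] True by simp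
      then have "x i powr (-1/3) - y i powr (-1/3) \<le> 0" using Bp
        by (simp add: mult_le_0_iff)
      then show ?thesis using mono[OF that] by simp
    qed
    then have "(\<Sum>i\<in>I. y i powr (4/3)) \<le> (\<Sum>i\<in>I. x i powr (4/3))"
      using assms(4) by (intro sum_mono powr_mono2) auto
    moreover have "0 \<le> (\<Sum>i\<in>I. x i powr (4/3))" by (intro sum_nonneg) auto
    ultimately show ?thesis by linarith
  next
    case False
    have up: "x i \<le> y i" if "i \<in> I" "i \<noteq> j" for i
    proof -
      have "B * (x i powr (-1/3) - y i powr (-1/3)) > 0" using eq[OF that(1)] L0[OF that(2)] False by simp
      then have "x i powr (-1/3) - y i powr (-1/3) > 0" using Bp
        by (simp add: zero_less_mult_iff)
      then show ?thesis using mono[OF that(1)] by linarith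
    qed
    show ?thesis
    proof (cases "j \<in> I")
      case True
      show ?thesis
        using comb[OF fin True, of x y] assms(3,4,5) up by auto
    next
      case jn: False
      have "(\<Sum>i\<in>I. y i - x i) = 0" using assms(5) by (simp add: sum_subtractf)
      then have "\<forall>i\<in>I. y i - x i = 0"
        using fin up jn by (subst sum_nonneg_eq_0_iff[symmetric]) auto
      then show ?thesis
        by (simp add: sum_nonneg)
    qed
  qed
qed

end
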